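(* Let $u_n:\mathbb R^p\to\mathbb R^p$, $n\ge1$, be a sequence of random differentiable estimating functions and $\mathbf J_n(\boldsymbol\theta)=-\frac{d}{d\boldsymbol\theta^\top}u_n(\boldsymbol\theta)$. Assume there exist invertible symmetric matrices $\mathbf V_n$ and parameter values $\boldsymbol\theta^*_n\in\mathbb R^p$ such that: (G1) $\|\mathbf V_n^{-1}\|\to0$; (G2) there exists $l>0$ with $\mathbb P(l_n<l)\to0$, where $l_n=\inf_{\|\boldsymbol\phi\|=1}\boldsymbol\phi^\top\mathbf V_n^{-1}\mathbf J_n(\boldsymbol\theta^*_n)\mathbf V_n^{-1}\boldsymbol\phi$; (G3) for every $d>0$, $\gamma_{nd}:=\sup_{\|\mathbf V_n(\boldsymbol\theta-\boldsymbol\theta^*_n)\|\le d}\|\mathbf V_n^{-1}\{\mathbf J_n(\boldsymbol\theta)-\mathbf J_n(\boldsymbol\theta^*_n)\}\mathbf V_n^{-1}\|_M\to0$ in probability; (G4) $\mathbf V_n^{-1}u_n(\boldsymbol\theta^*_n)$ is bounded in probability, i.e. for every $\epsilon>0$ there is $d$ with $\mathbb P(\|\mathbf V_n^{-1}u_n(\boldsymbol\theta^*_n)\|>d)\le\epsilon$ for all sufficiently large $n$. Then for every $\epsilon>0$ there exists $d>0$ such that, for all sufficiently large $n$, \[ \mathbb P\big\{\exists\,\tilde{\boldsymbol\theta}_n:\ u_n(\tilde{\boldsymbol\theta}_n)=0\ \text{and}\ \|\mathbf V_n(\tilde{\boldsymbol\theta}_n-\boldsymbol\theta^*_n)\|<d\big\}>1-\epsilon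 . \]
   Context: For a matrix $\mathbf A=[a_{ij}]$, $\|\mathbf A\|_M=\max_{i,j}|a_{ij}|$; $\|\cdot\|$ denotes the Euclidean norm for vectors and the corresponding operator norm for matrices. The distribution of $u_n$ is governed by an underlying probability measure $\mathbb P$. *)

theory Defs
  imports "HOL-Analysis.Analysis" "HOL-Probability.Probability"
begin

definition maxnorm :: "real^'n^'m \<Rightarrow> real" where
  "maxnorm A = Max (range (\<lambda>(i,j). \<bar>A $ i $ j\<bar>))"

definition opnorm :: "real^'n^'m \<Rightarrow> real" where
  "opnorm A = onorm (\<lambda>x. A *v x)"

definition lmin :: "real^'p^'p \<Rightarrow> real^'p^'p \<Rightarrow> real" where
  "lmin V J = Inf ((\<lambda>\<phi>. \<phi> \<bullet> ((matrix_inv V ** J ** matrix_inv V) *v \<phi>)) ` {\<phi>. norm \<phi> = 1})"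

definition gam :: "real^'p^'p \<Rightarrow> (real^'p \<Rightarrow> real^'p^'p) \<Rightarrow> real^'p \<Rightarrow> real \<Rightarrow> ereal" where
  "gam V J \<theta>s d = (SUP \<theta>\<in>{\<theta>. norm (V *v (\<theta> - \<theta>s)) \<le> d}.
      ereal (maxnorm (matrix_inv V ** (J \<theta> - J \<theta>s) ** matrix_inv V)))"

end

theory Submission
  imports Defs
begin

lemma matrix_inv_props:
  assumes "invertible (A::real^'n^'n)"
  shows "A ** matrix_inv A = mat 1" "matrix_inv A ** A = mat 1"
proof -
  have "\<exists>A'::real^'n^'n. A ** A' = mat 1 \<and> A' ** A = mat 1" using assms invertible_def by blast
  hence "A ** matrix_inv A = mat 1 \<and> matrix_inv A ** A = mat 1"
    unfolding matrix_inv_def by (rule someI_ex)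
  thus "A ** matrix_inv A = mat 1" "matrix_inv A ** A = mat 1" by auto
qed

lemma zero_in_ball:
  fixes g :: "real^'p \<Rightarrow> real^'p"
  assumes r: "r > 0" and cont: "continuous_on (cball 0 r) g"
    and sph: "\<And>\<phi>. norm \<phi> = r \<Longrightarrow> \<phi> \<bullet> g \<phi> < 0"
  shows "\<exists>\<phi>\<in>cball 0 r. g \<phi> = 0"
proof (rule ccontr)
  assume "\<not> ?thesis"
  hence nz: "\<And>\<phi>. \<phi> \<in> cball 0 r \<Longrightarrow> g \<phi> \<noteq> 0" by auto
  define h where "h \<phi> = (r / norm (g \<phi>)) *\<^sub>R g \<phi>" for \<phi>
  have hc: "continuous_on (cball 0 r) h"
    unfolding h_def
    by (intro continuous_intros cont) (use nz in auto)
  have hn: "\<And>\<phi>. \<phi> \<in> cball 0 r \<Longrightarrow> norm (h \<phi>) = r"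
    using nz r by (simp add: h_def)
  have "h \<in> cball 0 r \<rightarrow> cball 0 r" using hn by auto
  then obtain \<phi> where \<phi>: "\<phi> \<in> cball 0 r" "h \<phi> = \<phi>"
    using brouwer_ball[OF r hc] by blast
  have n: "norm \<phi> = r" using hn[OF \<phi>(1)] \<phi>(2) by simp
  have "\<phi> \<bullet> g \<phi> = (r / norm (g \<phi>)) * (g \<phi> \<bullet> g \<phi>)"
    using \<phi>(2) by (metis h_def inner_scaleR_left)
  also have "\<dots> > 0" using nz[OF \<phi>(1)] r by (simp add: divide_pos_pos)
  finally show False using sph[OF n] by simp
qed

lemma lmin_le:
  fixes V J :: "real^'p^'p"
  assumes "norm \<phi> = 1"
  shows "lmin V J \<le> \<phi> \<bullet> ((matrix_inv V ** J ** matrix_inv V) *v \<phi>)"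
proof -
  let ?B = "matrix_inv V ** J ** matrix_inv V"
  have "continuous_on (sphere 0 1) (\<lambda>\<phi>::real^'p. \<phi> \<bullet> (?B *v \<phi>))"
    by (intro continuous_intros linear_continuous_on matrix_vector_mul_bounded_linear)
  hence "compact ((\<lambda>\<phi>. \<phi> \<bullet> (?B *v \<phi>)) ` sphere 0 1)"
    by (intro compact_continuous_image) auto
  hence "bdd_below ((\<lambda>\<phi>. \<phi> \<bullet> (?B *v \<phi>)) ` sphere 0 1)"
    by (simp add: bounded_imp_bdd_below compact_imp_bounded)
  moreover have "sphere 0 1 = {\<phi>::real^'p. norm \<phi> = 1}" by auto
  ultimately show ?thesis unfolding lmin_def using assms
    by (intro cInf_lower) auto
qed

lemma maxnorm_ge: "\<bar>A $ i $ j\<bar> \<le> maxnorm (A::real^'n^'m)"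
  unfolding maxnorm_def by (rule Max_ge) auto

lemma quad_bound:
  fixes D :: "real^'p^'p"
  shows "\<bar>\<phi> \<bullet> (D *v \<phi>)\<bar> \<le> real (CARD('p))^2 * maxnorm D * norm \<phi>^2"
proof -
  have "\<phi> \<bullet> (D *v \<phi>) = (\<Sum>i\<in>UNIV. \<Sum>j\<in>UNIV. \<phi>$i * D$i$j * \<phi>$j)"
    by (simp add: inner_vec_def matrix_vector_mult_def sum_distrib_left mult.assoc)
  also have "\<bar>\<dots>\<bar> \<le> (\<Sum>i\<in>(UNIV::'p set). \<Sum>j\<in>(UNIV::'p set). maxnorm D * norm \<phi>^2)"
  proof -
    have "\<bar>\<phi>$i * D$i$j * \<phi>$j\<bar> \<le> maxnorm D * norm \<phi>^2" for i j
    proof -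
      have "\<bar>\<phi>$i * D$i$j * \<phi>$j\<bar> = \<bar>D$i$j\<bar> * (\<bar>\<phi>$i\<bar> * \<bar>\<phi>$j\<bar>)" by (simp add: abs_mult)
      also have "\<dots> \<le> maxnorm D * (norm \<phi> * norm \<phi>)"
        by (intro mult_mono maxnorm_ge component_le_norm_cart) (auto intro: order_trans[OF abs_ge_zero maxnorm_ge])
      finally show ?thesis by (simp add: power2_eq_square)
    qed
    hence "\<bar>\<Sum>j\<in>UNIV. \<phi>$i * D$i$j * \<phi>$j\<bar> \<le> (\<Sum>j\<in>(UNIV::'p set). maxnorm D * norm \<phi>^2)" for i
      by (rule order_trans[OF sum_abs sum_mono])
    thus ?thesis
      by (rule order_trans[OF sum_abs sum_mono])
  qed
  also have "\<dots> = real (CARD('p))^2 * maxnorm D * norm \<phi>^2" by (simp add: power2_eq_square)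
  finally show ?thesis .
qed

lemma mvm_neg: "(A::real^'n^'m) *v (- x) = - (A *v x)"
  by (simp add: matrix_vector_mult_def vec_eq_iff sum_negf)

lemma det:
  fixes U :: "real^'p \<Rightarrow> real^'p" and Jf :: "real^'p \<Rightarrow> real^'p^'p"
    and V :: "real^'p^'p" and \<theta>s :: "real^'p"
  assumes der: "\<And>\<theta>. (U has_derivative (\<lambda>h. - (Jf \<theta> *v h))) (at \<theta>)"
    and inv: "invertible V"
    and l: "l > 0" and lm: "lmin V (Jf \<theta>s) \<ge> l"
    and gm: "gam V Jf \<theta>s r \<le> ereal \<eta>" and eta: "real (CARD('p))^2 * \<eta> \<le> l/2"
    and g0: "norm (matrix_inv V *v U \<theta>s) \<le> d0" and r: "r > 0" and rd: "d0 < l*r/2"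
  shows "\<exists>\<theta>. U \<theta> = 0 \<and> norm (V *v (\<theta> - \<theta>s)) \<le> r"
proof -
  define Vi where "Vi = matrix_inv V"
  have VVi: "V *v (Vi *v x) = x" for x
    using matrix_inv_props(1)[OF inv] by (simp add: Vi_def matrix_vector_mul_assoc)
  define g where "g \<phi> = Vi *v U (\<theta>s + Vi *v \<phi>)" for \<phi>
  define g' where "g' \<phi> h = Vi *v (- (Jf (\<theta>s + Vi *v \<phi>) *v (Vi *v h)))" for \<phi> h
  have derg: "(g has_derivative g' \<phi>) (at \<phi>)" for \<phi>
  proof -
    have d1: "((\<lambda>\<phi>. \<theta>s + Vi *v \<phi>) has_derivative (\<lambda>h. Vi *v h)) (at \<phi>)"
      by (auto intro!: derivative_eq_intros bounded_linear.has_derivative[OF matrix_vector_mul_bounded_linear])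
    have d2: "((\<lambda>\<phi>. U (\<theta>s + Vi *v \<phi>)) has_derivative (\<lambda>h. - (Jf (\<theta>s + Vi *v \<phi>) *v (Vi *v h)))) (at \<phi>)"
      using has_derivative_compose[OF d1 der] by (simp add: o_def)
    show ?thesis unfolding g_def g'_def
      by (rule bounded_linear.has_derivative[OF matrix_vector_mul_bounded_linear d2])
  qed
  have cont: "continuous_on (cball 0 r) g"
    using derg has_derivative_continuous continuous_at_imp_continuous_on by blast
  define B0 where "B0 = Vi ** Jf \<theta>s ** Vi"
  have sph: "\<phi> \<bullet> g \<phi> < 0" if n: "norm \<phi> = r" for \<phi>
  proof -
    define f where "f t = \<phi> \<bullet> g (t *\<^sub>R \<phi>)" for t
    define f' where "f' t s = \<phi> \<bullet> g' (t *\<^sub>R \<phi>) (s *\<^sub>R \<phi>)" for t s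
    have "(f has_derivative f' t) (at t within {0..1})" for t
    proof -
      have a: "((\<lambda>t::real. t *\<^sub>R \<phi>) has_derivative (\<lambda>s. s *\<^sub>R \<phi>)) (at t)"
        by (auto intro!: derivative_eq_intros)
      have b: "((\<lambda>t. g (t *\<^sub>R \<phi>)) has_derivative (\<lambda>s. g' (t *\<^sub>R \<phi>) (s *\<^sub>R \<phi>))) (at t)"
        using has_derivative_compose[OF a derg] by (simp add: o_def)
      have "(f has_derivative f' t) (at t)"
        unfolding f_def f'_def
        by (rule bounded_linear.has_derivative[OF bounded_linear_inner_right b])
      thus ?thesis by (rule has_derivative_at_withinI)
    qed
    then obtain \<xi> where \<xi>: "\<xi> \<in> {0<..<1}" "f 1 - f 0 = f' \<xi> (1 - 0)"
      using mvt_simple[of 0 1 f f'] by auto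
    define D where "D = Vi ** (Jf (\<theta>s + Vi *v (\<xi> *\<^sub>R \<phi>)) - Jf \<theta>s) ** Vi"
    have "f' \<xi> 1 = - (\<phi> \<bullet> (B0 *v \<phi>)) - (\<phi> \<bullet> (D *v \<phi>))"
      unfolding f'_def g'_def B0_def D_def
      by (simp add: matrix_vector_mul_assoc[symmetric] algebra_simps inner_diff_right inner_add_right mvm_neg)
    moreover have "\<phi> \<bullet> (B0 *v \<phi>) \<ge> l * r^2"
    proof -
      have "l \<le> ((1/r) *\<^sub>R \<phi>) \<bullet> (B0 *v ((1/r) *\<^sub>R \<phi>))"
        using lm lmin_le[of "(1/r) *\<^sub>R \<phi>" V "Jf \<theta>s"] n r by (simp add: B0_def Vi_def)
      also have "\<dots> = (\<phi> \<bullet> (B0 *v \<phi>)) / r^2"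
        by (simp add: matrix_vector_mult_scaleR power2_eq_square)
      finally show ?thesis using r by (simp add: field_simps)
    qed
    moreover have "\<bar>\<phi> \<bullet> (D *v \<phi>)\<bar> \<le> l * r^2 / 2"
    proof -
      have mem: "\<theta>s + Vi *v (\<xi> *\<^sub>R \<phi>) \<in> {\<theta>. norm (V *v (\<theta> - \<theta>s)) \<le> r}"
        using \<xi>(1) n r by (simp add: VVi mult_le_cancel_right1)
      have "ereal (maxnorm D) \<le> gam V Jf \<theta>s r"
        unfolding gam_def D_def Vi_def using mem[unfolded Vi_def] by (rule SUP_upper2) simp
      hence mD: "maxnorm D \<le> \<eta>" using gm order_trans ereal_less_eq(3) by metis
      have "\<bar>\<phi> \<bullet> (D *v \<phi>)\<bar> \<le> real (CARD('p))^2 * maxnorm D * norm \<phi>^2"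
        by (rule quad_bound)
      also have "\<dots> \<le> real (CARD('p))^2 * \<eta> * r^2"
        using mD n by (simp add: mult_right_mono mult_left_mono)
      also have "\<dots> \<le> l/2 * r^2" using eta by (intro mult_right_mono) auto
      finally show ?thesis by simp
    qed
    moreover have "f 0 \<le> r * d0"
    proof -
      have "f 0 \<le> norm \<phi> * norm (g 0)" unfolding f_def by (simp add: norm_cauchy_schwarz)
      also have "\<dots> \<le> r * d0" using g0 n r by (simp add: g_def Vi_def mult_left_mono)
      finally show ?thesis .
    qed
    ultimately have "f 1 \<le> r * (d0 - l*r/2)"
      using \<xi>(2) by (simp add: algebra_simps power2_eq_square abs_le_iff)
    moreover have "r * (d0 - l*r/2) < 0" using rd r by (simp add: mult_pos_neg)
    ultimately show ?thesis by (simp add: f_def)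
  qed
  obtain \<phi> where \<phi>: "\<phi> \<in> cball 0 r" "g \<phi> = 0" using zero_in_ball[OF r cont sph] by blast
  show ?thesis
  proof (intro exI conjI)
    show "U (\<theta>s + Vi *v \<phi>) = 0" using VVi[of "U (\<theta>s + Vi *v \<phi>)"] \<phi>(2) by (simp add: g_def)
    show "norm (V *v (\<theta>s + Vi *v \<phi> - \<theta>s)) \<le> r" using \<phi>(1) by (simp add: VVi)
  qed
qed

theorem theoremE1:
  fixes M :: "'a measure"
    and u :: "nat \<Rightarrow> 'a \<Rightarrow> real^'p \<Rightarrow> real^'p"
    and J :: "nat \<Rightarrow> 'a \<Rightarrow> real^'p \<Rightarrow> real^'p^'p"
    and V :: "nat \<Rightarrow> real^'p^'p"
    and \<theta>s :: "nat \<Rightarrow> real^'p"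
  assumes prob: "prob_space M"
    and deriv: "\<And>n \<omega> \<theta>. \<omega> \<in> space M \<Longrightarrow>
        (u n \<omega> has_derivative (\<lambda>h. - (J n \<omega> \<theta> *v h))) (at \<theta>)"
    and V_inv: "\<And>n. invertible (V n)"
    and V_sym: "\<And>n. transpose (V n) = V n"
    and meas_u: "\<And>n. (\<lambda>\<omega>. u n \<omega> (\<theta>s n)) \<in> borel_measurable M"
    and meas_l: "\<And>n c. {\<omega>\<in>space M. lmin (V n) (J n \<omega> (\<theta>s n)) < c} \<in> sets M"
    and meas_g: "\<And>n d c. {\<omega>\<in>space M. gam (V n) (J n \<omega>) (\<theta>s n) d > ereal c} \<in> sets M"
    and G1: "(\<lambda>n. opnorm (matrix_inv (V n))) \<longlonglongrightarrow> 0"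
    and G2: "\<exists>l>0. (\<lambda>n. measure M {\<omega>\<in>space M. lmin (V n) (J n \<omega> (\<theta>s n)) < l}) \<longlonglongrightarrow> 0"
    and G3: "\<And>d \<eta>. d > 0 \<Longrightarrow> \<eta> > 0 \<Longrightarrow>
        (\<lambda>n. measure M {\<omega>\<in>space M. gam (V n) (J n \<omega>) (\<theta>s n) d > ereal \<eta>}) \<longlonglongrightarrow> 0"
    and G4: "\<And>\<epsilon>. \<epsilon> > 0 \<Longrightarrow> \<exists>d. eventually (\<lambda>n.
        measure M {\<omega>\<in>space M. norm (matrix_inv (V n) *v u n \<omega> (\<theta>s n)) > d} \<le> \<epsilon>) sequentially"
  shows "\<forall>\<epsilon>>0. \<exists>d>0. eventually (\<lambda>n. \<exists>A\<in>sets M.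
        A \<subseteq> {\<omega>\<in>space M. \<exists>\<theta>. u n \<omega> \<theta> = 0 \<and> norm (V n *v (\<theta> - \<theta>s n)) < d}
        \<and> measure M A > 1 - \<epsilon>) sequentially"
proof (intro allI impI)
  fix \<epsilon> :: real assume e: "\<epsilon> > 0"
  interpret P: prob_space M by (rule prob)
  obtain l where l: "l > 0"
    and l2: "(\<lambda>n. measure M {\<omega>\<in>space M. lmin (V n) (J n \<omega> (\<theta>s n)) < l}) \<longlonglongrightarrow> 0"
    using G2 by blast
  obtain d0 where d0: "eventually (\<lambda>n.
        measure M {\<omega>\<in>space M. norm (matrix_inv (V n) *v u n \<omega> (\<theta>s n)) > d0} \<le> \<epsilon>/2) sequentially"
    using G4[of "\<epsilon>/2"] e by auto
  define d1 where "d1 = max d0 1"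
  define r where "r = 4 * d1 / l"
  define \<eta> where "\<eta> = l / (2 * real (CARD('p))^2)"
  have d1: "d1 > 0" "d1 \<ge> d0" by (auto simp: d1_def)
  have r: "r > 0" using d1 l by (simp add: r_def)
  have rd: "d1 < l * r / 2" using d1 l by (simp add: r_def)
  have eta: "\<eta> > 0" "real (CARD('p))^2 * \<eta> \<le> l/2" using l by (auto simp: \<eta>_def)
  have g3: "(\<lambda>n. measure M {\<omega>\<in>space M. gam (V n) (J n \<omega>) (\<theta>s n) r > ereal \<eta>}) \<longlonglongrightarrow> 0"
    using G3 r eta by blast
  have ev1: "eventually (\<lambda>n. measure M {\<omega>\<in>space M. lmin (V n) (J n \<omega> (\<theta>s n)) < l} < \<epsilon>/4) sequentially"
    using order_tendstoD(2)[OF l2, of "\<epsilon>/4"] e by simp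
  have ev2: "eventually (\<lambda>n. measure M {\<omega>\<in>space M. gam (V n) (J n \<omega>) (\<theta>s n) r > ereal \<eta>} < \<epsilon>/4) sequentially"
    using order_tendstoD(2)[OF g3, of "\<epsilon>/4"] e by simp
  show "\<exists>d>0. eventually (\<lambda>n. \<exists>A\<in>sets M.
        A \<subseteq> {\<omega>\<in>space M. \<exists>\<theta>. u n \<omega> \<theta> = 0 \<and> norm (V n *v (\<theta> - \<theta>s n)) < d}
        \<and> measure M A > 1 - \<epsilon>) sequentially"
  proof (intro exI conjI)
    show "r + 1 > 0" using r by simp
    show "eventually (\<lambda>n. \<exists>A\<in>sets M.
        A \<subseteq> {\<omega>\<in>space M. \<exists>\<theta>. u n \<omega> \<theta> = 0 \<and> norm (V n *v (\<theta> - \<theta>s n)) < r + 1}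
        \<and> measure M A > 1 - \<epsilon>) sequentially"
      using ev1 ev2 d0
    proof eventually_elim
      case (elim n)
      define B1 where "B1 = {\<omega>\<in>space M. lmin (V n) (J n \<omega> (\<theta>s n)) < l}"
      define B2 where "B2 = {\<omega>\<in>space M. gam (V n) (J n \<omega>) (\<theta>s n) r > ereal \<eta>}"
      define B3 where "B3 = {\<omega>\<in>space M. norm (matrix_inv (V n) *v u n \<omega> (\<theta>s n)) > d1}"
      define B3' where "B3' = {\<omega>\<in>space M. norm (matrix_inv (V n) *v u n \<omega> (\<theta>s n)) > d0}"
      have mf: "(\<lambda>\<omega>. norm (matrix_inv (V n) *v u n \<omega> (\<theta>s n))) \<in> borel_measurable M"
      proof -
        have "(\<lambda>x::real^'p. norm (matrix_inv (V n) *v x)) \<in> borel_measurable borel"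
          by (intro borel_measurable_continuous_onI continuous_intros linear_continuous_on
              matrix_vector_mul_bounded_linear)
        from measurable_compose[OF meas_u this] show ?thesis by (simp add: o_def)
      qed
      have s1: "B1 \<in> sets M" "B2 \<in> sets M" using meas_l meas_g by (auto simp: B1_def B2_def)
      have s3: "B3 \<in> sets M" "B3' \<in> sets M" unfolding B3_def B3'_def using mf by measurable
      define A where "A = space M - (B1 \<union> B2 \<union> B3)"
      have sA: "A \<in> sets M" using s1 s3 by (auto simp: A_def)
      have sub: "A \<subseteq> {\<omega>\<in>space M. \<exists>\<theta>. u n \<omega> \<theta> = 0 \<and> norm (V n *v (\<theta> - \<theta>s n)) < r + 1}"
      proof safe
        fix \<omega> assume w: "\<omega> \<in> A"
        hence sp: "\<omega> \<in> space M" by (simp add: A_def)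
        have "lmin (V n) (J n \<omega> (\<theta>s n)) \<ge> l" "gam (V n) (J n \<omega>) (\<theta>s n) r \<le> ereal \<eta>"
             "norm (matrix_inv (V n) *v u n \<omega> (\<theta>s n)) \<le> d1"
          using w by (auto simp: A_def B1_def B2_def B3_def not_less)
        from det[OF deriv[OF sp] V_inv l this(1) this(2) eta(2) this(3) r rd]
        obtain \<theta> where "u n \<omega> \<theta> = 0" "norm (V n *v (\<theta> - \<theta>s n)) \<le> r" by blast
        thus "\<exists>\<theta>. u n \<omega> \<theta> = 0 \<and> norm (V n *v (\<theta> - \<theta>s n)) < r + 1" by force
      qed (simp add: A_def)
      have "measure M (B1 \<union> B2 \<union> B3) \<le> measure M B1 + measure M B2 + measure M B3"
      proof -
        have "measure M (B1 \<union> B2 \<union> B3) \<le> measure M (B1 \<union> B2) + measure M B3"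
          using s1 s3 by (intro measure_subadditive) (auto simp: P.emeasure_eq_measure)
        also have "measure M (B1 \<union> B2) \<le> measure M B1 + measure M B2"
          using s1 s3 by (intro measure_subadditive) (auto simp: P.emeasure_eq_measure)
        finally show ?thesis by simp
      qed
      moreover have "measure M B3 \<le> measure M B3'"
        using s3 d1 by (intro P.finite_measure_mono) (auto simp: B3_def B3'_def)
      moreover have "measure M A = 1 - measure M (B1 \<union> B2 \<union> B3)"
        unfolding A_def using s1 s3 by (simp add: P.prob_compl)
      ultimately have "measure M A > 1 - \<epsilon>"
        using elim by (simp add: B1_def B2_def B3'_def)
      thus ?case using sA sub by blast
    qed
  qed
qed

end
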